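(* Let $\lambda_N^1=\max(\lambda_{\max}(L_1),\lambda_{\max}(L_2))$ be the greatest of the largest Laplacian eigenvalues of the two layers. For $c\ge0$ define $$H(c)=\min_{w\ge0,\ w^T\boldsymbol 1=c}\ \big(\lambda_n[L(w)]-\lambda_2[L(w)]\big).$$ Then $H(c)\ge\lambda_N^1-\frac{2c}{N}$ for all $c\ge0$, and the inequality is strict for $c\neq0$.
   Context: A multiplex network consists of two layers $G_1,G_2$, simple undirected graphs on $N$ vertices each with Laplacians $L_1,L_2\in\mathbb{R}^{N\times N}$; the $i$-th vertex of $G_1$ is joined by an interlayer edge of weight $w_i\ge0$ to the $i$-th vertex of $G_2$. With $W=\operatorname{diag}(w)$ the multiplex Laplacian is $L(w)=\begin{bmatrix}L_1+W&-W\\-W&L_2+W\end{bmatrix}\in\mathbb{R}^{2N\times 2N}$, with eigenvalues $0=\lambda_1\le\lambda_2\le\dots\le\lambda_n$, $n=2N$. $\boldsymbol 1$ is the all-ones vector. *)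

theory Defs
  imports "Jordan_Normal_Form.Char_Poly" "HOL-Library.Multiset"
begin

definition simple_graph :: "nat \<Rightarrow> (nat \<Rightarrow> nat \<Rightarrow> bool) \<Rightarrow> bool" where
  "simple_graph N E \<longleftrightarrow> (\<forall>i<N. \<forall>j<N. E i j \<longleftrightarrow> E j i) \<and> (\<forall>i<N. \<not> E i i)"

definition laplacian :: "nat \<Rightarrow> (nat \<Rightarrow> nat \<Rightarrow> bool) \<Rightarrow> real mat" where
  "laplacian N E = mat N N (\<lambda>(i,j).
      if i = j then real (card {k. k < N \<and> E i k})
      else if E i j then -1 else 0)"

definition diag_w :: "nat \<Rightarrow> (nat \<Rightarrow> real) \<Rightarrow> real mat" where
  "diag_w N w = mat N N (\<lambda>(i,j). if i = j then w i else 0)"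

definition multiplex_laplacian :: "nat \<Rightarrow> real mat \<Rightarrow> real mat \<Rightarrow> (nat \<Rightarrow> real) \<Rightarrow> real mat" where
  "multiplex_laplacian N L1 L2 w =
     four_block_mat (L1 + diag_w N w) (- diag_w N w) (- diag_w N w) (L2 + diag_w N w)"

(* eigenvalues with multiplicity (roots of the characteristic polynomial),
   sorted increasingly: eigs A ! (k-1) = lambda_k *)
definition eigs :: "real mat \<Rightarrow> real list" where
  "eigs A = sorted_list_of_multiset (proots (char_poly A))"

definition eig :: "real mat \<Rightarrow> nat \<Rightarrow> real" where
  "eig A k = eigs A ! (k - 1)"

definition lambda_max :: "real mat \<Rightarrow> real" where
  "lambda_max A = eig A (dim_row A)"

definition H :: "nat \<Rightarrow> real mat \<Rightarrow> real mat \<Rightarrow> real \<Rightarrow> real" where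
  "H N L1 L2 c = (INF w \<in> {w. (\<forall>i<N. w i \<ge> 0) \<and> (\<Sum>i<N. w i) = c}.
       eig (multiplex_laplacian N L1 L2 w) (2*N) - eig (multiplex_laplacian N L1 L2 w) 2)"

end

theory Submission
  imports Defs "Jordan_Normal_Form.Schur_Decomposition" "HOL-Computational_Algebra.Fundamental_Theorem_Algebra"
begin

lemma real_cscalar: fixes v w :: "real vec" shows "v \<bullet>c w = v \<bullet> w"
  by (simp add: scalar_prod_def)

lemma normalize_unit:
  fixes v :: "real vec" assumes "v \<in> carrier_vec n" "v \<noteq> 0\<^sub>v n"
  shows "((1/sqrt(v\<bullet>v)) \<cdot>\<^sub>v v) \<bullet> ((1/sqrt(v\<bullet>v)) \<cdot>\<^sub>v v) = 1"
proof -
  have "v \<bullet> v \<noteq> 0" using assms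
    by (metis conjugate_square_eq_0_vec real_cscalar) 
  moreover have "v \<bullet> v \<ge> 0" by (simp add: scalar_prod_def sum_nonneg)
  ultimately have p: "v \<bullet> v > 0" by linarith
  have "((1/sqrt(v\<bullet>v)) \<cdot>\<^sub>v v) \<bullet> ((1/sqrt(v\<bullet>v)) \<cdot>\<^sub>v v) = (1/sqrt(v\<bullet>v)) * ((1/sqrt(v\<bullet>v)) * (v \<bullet> v))"
    using assms by (simp add: smult_scalar_prod_distrib scalar_prod_smult_distrib)
  also have "\<dots> = 1" using p by (simp add: field_simps)
  finally show ?thesis .
qed

lemma orth_completion:
  fixes v :: "real vec"
  assumes v: "v \<in> carrier_vec n" and v0: "v \<noteq> 0\<^sub>v n" and u1: "v \<bullet> v = 1"
  shows "\<exists>W. W \<in> carrier_mat n n \<and> W\<^sup>T * W = 1\<^sub>m n \<and> col W 0 = v"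
proof -
  interpret cof_vec_space n "TYPE(real)" .
  define b where "b = basis_completion v"
  from basis_completion[OF v v0, folded b_def]
  have dist_b: "distinct b" 
    and indep: "\<not> lin_dep (set b)" and b: "set b \<subseteq> carrier_vec n" and hdb: "hd b = v" 
    and len_b: "length b = n" by auto
  have n: "n \<noteq> 0" using v v0 by auto
  from hdb len_b n obtain vs where bv: "b = v # vs" by (cases b, auto)
  define ws where "ws = gram_schmidt n b"
  from gram_schmidt_result[OF b dist_b indep refl, folded ws_def]
  have ws: "set ws \<subseteq> carrier_vec n" "corthogonal ws" "length ws = n" 
    by (auto simp: len_b)
  from gram_schmidt_hd[OF v, of vs, folded bv] have hdws: "hd ws = v" unfolding ws_def .
  define ws' where "ws' = map (\<lambda>w. (1/sqrt(w\<bullet>w)) \<cdot>\<^sub>v w) ws"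
  define W where "W = mat_of_cols n ws'"
  have ws'c: "set ws' \<subseteq> carrier_vec n" using ws unfolding ws'_def by auto
  have W: "W \<in> carrier_mat n n" unfolding W_def using ws ws'_def by auto
  have colW: "col W i = ws' ! i" if "i < n" for i
    unfolding W_def using that ws ws'c ws'_def by (intro col_mat_of_cols) auto
  have wsi: "ws ! i \<in> carrier_vec n" if "i < n" for i using ws that by auto
  have pos: "ws!i \<bullet> ws!i > 0" if "i < n" for i
  proof -
    have "ws!i \<bullet> ws!i \<noteq> 0" using corthogonalD[OF ws(2), of i i] that ws(3) by (simp add: real_cscalar)
    moreover have "ws!i \<bullet> ws!i \<ge> 0" by (simp add: scalar_prod_def sum_nonneg)
    ultimately show ?thesis by linarith
  qed
  have "W\<^sup>T * W = 1\<^sub>m n"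
  proof (rule eq_matI)
    fix i j assume i: "i < dim_row (1\<^sub>m n)" and j: "j < dim_col (1\<^sub>m n)"
    hence i: "i < n" and j: "j < n" by auto
    have "(W\<^sup>T * W) $$ (i,j) = col W i \<bullet> col W j" using W i j by simp
    also have "\<dots> = ws' ! i \<bullet> ws' ! j" using colW[OF i] colW[OF j] by simp
    also have "\<dots> = (1/sqrt(ws!i\<bullet>ws!i)) * ((1/sqrt(ws!j\<bullet>ws!j)) * (ws!i \<bullet> ws!j))"
      unfolding ws'_def using i j ws wsi[OF i] wsi[OF j]
      by (simp add: smult_scalar_prod_distrib scalar_prod_smult_distrib)
    also have "\<dots> = 1\<^sub>m n $$ (i,j)"
    proof (cases "i = j")
      case True thus ?thesis using pos[OF i] i by (simp add: field_simps)
    next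
      case False
      hence "ws!i \<bullet> ws!j = 0" using corthogonalD[OF ws(2), of i j] i j ws(3) by (simp add: real_cscalar)
      thus ?thesis using False i j by simp
    qed
    finally show "(W\<^sup>T * W) $$ (i,j) = 1\<^sub>m n $$ (i,j)" .
  qed (use W in auto)
  moreover have "col W 0 = v"
  proof -
    have "ws ! 0 = v" using hdws n ws(3) by (metis hd_conv_nth list.size(3))
    hence "ws' ! 0 = v" unfolding ws'_def using n ws(3) u1 by simp
    thus ?thesis using colW[of 0] n by simp
  qed
  ultimately show ?thesis using W by blast
qed

lemma sym_real_root:
  fixes A :: "real mat"
  assumes A: "A \<in> carrier_mat n n" and sym: "A\<^sup>T = A" and n: "n > 0"
  shows "\<exists>x. poly (char_poly A) x = 0"
proof -
  define Ac where "Ac = map_mat (of_real :: real \<Rightarrow> complex) A"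
  have Ac: "Ac \<in> carrier_mat n n" using A unfolding Ac_def by auto
  have cp: "char_poly Ac = map_poly of_real (char_poly A)"
    unfolding Ac_def by (rule of_real_hom.char_poly_hom[OF A])
  have "degree (char_poly Ac) = n" unfolding cp of_real_hom.degree_map_poly_hom
    using degree_monic_char_poly[OF A] by simp
  hence "\<not> constant (poly (char_poly Ac))" using n by (simp add: constant_degree)
  then obtain z where z: "poly (char_poly Ac) z = 0" using fundamental_theorem_of_algebra by blast
  hence "eigenvalue Ac z" using eigenvalue_root_char_poly[OF Ac] by simp
  then obtain v where v: "v \<in> carrier_vec n" "v \<noteq> 0\<^sub>v n" "Ac *\<^sub>v v = z \<cdot>\<^sub>v v"
    unfolding eigenvalue_def eigenvector_def using Ac by auto
  have symA: "A $$ (i,j) = A $$ (j,i)" if "i < n" "j < n" for i j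
    using sym that A by (metis carrier_matD index_transpose_mat(1))
  define s where "s = (\<Sum>i<n. cnj (v$i) * (Ac *\<^sub>v v) $ i)"
  have s1: "s = (\<Sum>i<n. \<Sum>j<n. cnj (v$i) * of_real (A $$ (i,j)) * v$j)"
    unfolding s_def
    apply (rule sum.cong[OF refl])
    using A v(1) by (auto simp: Ac_def scalar_prod_def sum_distrib_left mult.assoc intro!: sum.cong)
  have "cnj s = (\<Sum>i<n. \<Sum>j<n. v$i * of_real (A $$ (i,j)) * cnj (v$j))"
    unfolding s1 by simp
  also have "\<dots> = (\<Sum>j<n. \<Sum>i<n. v$i * of_real (A $$ (i,j)) * cnj (v$j))"
    by (rule sum.swap)
  also have "\<dots> = s" unfolding s1
    by (intro sum.cong refl, simp add: symA mult.commute mult.left_commute)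
  finally have cs: "cnj s = s" .
  define r where "r = (\<Sum>i<n. (cmod (v$i))^2)"
  have s2: "s = z * of_real r"
  proof -
    have "s = (\<Sum>i<n. cnj (v$i) * (z * v$i))" unfolding s_def using v by simp
    also have "\<dots> = z * (\<Sum>i<n. cnj (v$i) * v$i)" by (simp add: sum_distrib_left algebra_simps)
    also have "(\<Sum>i<n. cnj (v$i) * v$i) = (\<Sum>i<n. of_real ((cmod (v$i))^2))"
      by (intro sum.cong refl) (metis complex_norm_square mult.commute)
    also have "\<dots> = of_real r" unfolding r_def by simp
    finally show ?thesis .
  qed
  have "r > 0"
  proof -
    obtain i where i: "i < n" "v $ i \<noteq> 0" using v(1,2) by (metis carrier_vecD eq_vecI index_zero_vec)
    have "(cmod (v$i))^2 > 0" using i by simp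
    moreover have "(cmod (v$i))^2 \<le> r" unfolding r_def
      by (rule member_le_sum) (use i in auto)
    ultimately show ?thesis by linarith
  qed
  have "cnj z * of_real r = z * of_real r" using cs s2 by simp
  hence "cnj z = z" using \<open>r > 0\<close> by simp
  have "Im z = 0" using arg_cong[OF \<open>cnj z = z\<close>, of Im] by simp
  hence zr: "z = of_real (Re z)" by (simp add: complex_eq_iff)
  have "of_real (poly (char_poly A) (Re z)) = (0::complex)"
    using z unfolding cp by (subst (asm) zr, simp only: of_real_hom.poly_map_poly)
  thus ?thesis by auto
qed

definition diagm :: "nat \<Rightarrow> real list \<Rightarrow> real mat" where
  "diagm n ds = mat n n (\<lambda>(i,j). if i = j then ds!i else 0)"

lemma diagm_dims[simp]: "dim_row (diagm n ds) = n" "dim_col (diagm n ds) = n" unfolding diagm_def by auto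

lemma diagm_carrier[simp]: "diagm n ds \<in> carrier_mat n n" unfolding diagm_def by auto

lemma decomp_charpoly:
  fixes A U :: "real mat"
  assumes U: "U \<in> carrier_mat n n" and UU: "U\<^sup>T * U = 1\<^sub>m n" and len: "length ds = n"
    and A: "A = U * diagm n ds * U\<^sup>T"
  shows "char_poly A = (\<Prod>d\<leftarrow>ds. [:-d,1:])"
proof -
  have UT: "U\<^sup>T \<in> carrier_mat n n" using U by auto
  have UU': "U * U\<^sup>T = 1\<^sub>m n" using mat_mult_left_right_inverse[OF UT U UU] .
  have Ac: "A \<in> carrier_mat n n" using A U by auto
  have "similar_mat_wit A (diagm n ds) U (U\<^sup>T)"
    by (rule similar_mat_witI[OF UU' UU A Ac diagm_carrier U UT])
  hence "similar_mat A (diagm n ds)" unfolding similar_mat_def by blast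
  hence "char_poly A = char_poly (diagm n ds)" by (rule char_poly_similar)
  also have "\<dots> = (\<Prod>a\<leftarrow>diag_mat (diagm n ds). [:- a, 1:])"
    by (rule char_poly_upper_triangular[OF diagm_carrier]) (auto simp: upper_triangular_def diagm_def)
  also have "diag_mat (diagm n ds) = ds"
    by (rule nth_equalityI) (auto simp: diag_mat_def diagm_def len)
  finally show ?thesis .
qed

lemma proots_linprod: "proots (\<Prod>d\<leftarrow>ds. [:-d,1::real:]) = mset ds"
proof (induction ds)
  case Nil thus ?case by simp
next
  case (Cons d ds)
  have nz: "(\<Prod>d\<leftarrow>ds. [:-d,1::real:]) \<noteq> 0" by (auto simp: prod_list_zero_iff)
  have "proots (\<Prod>d\<leftarrow>d#ds. [:-d,1::real:]) = proots ([:-d,1:] * (\<Prod>d\<leftarrow>ds. [:-d,1::real:]))" by simp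
  also have "\<dots> = proots [:-d,1:] + proots (\<Prod>d\<leftarrow>ds. [:-d,1::real:])"
    by (rule proots_mult) (use nz in auto)
  finally show ?case using Cons by (simp add: proots_linear_factor)
qed

lemma eigs_decomp:
  fixes A U :: "real mat"
  assumes U: "U \<in> carrier_mat n n" and UU: "U\<^sup>T * U = 1\<^sub>m n" and len: "length ds = n"
    and s: "sorted ds" and A: "A = U * diagm n ds * U\<^sup>T"
  shows "eigs A = ds"
  unfolding eigs_def decomp_charpoly[OF U UU len A] proots_linprod sorted_list_of_multiset_mset
  using s by (simp add: sorted_sort_id)

lemma assoc5:
  assumes "W \<in> carrier_mat n n" "B \<in> carrier_mat n n" "D \<in> carrier_mat n n" "C \<in> carrier_mat n n" "V \<in> carrier_mat n n"
  shows "W * (B * D * C) * V = (W * B) * D * (C * V)"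
  using assms by (simp add: assoc_mult_mat[of _ n n _ n _ n] mult_carrier_mat[of _ n n _ n])

lemma assoc4:
  assumes "W \<in> carrier_mat n n" "B \<in> carrier_mat n n" "C \<in> carrier_mat n n" "V \<in> carrier_mat n n"
  shows "(B * W) * (C * V) = B * (W * C) * V"
  using assms by (simp add: assoc_mult_mat[of _ n n _ n _ n] mult_carrier_mat[of _ n n _ n])

lemma spectral:
  fixes A :: "real mat"
  assumes "A \<in> carrier_mat n n" "A\<^sup>T = A"
  shows "\<exists>U ds. U \<in> carrier_mat n n \<and> U\<^sup>T * U = 1\<^sub>m n \<and> length ds = n \<and> sorted ds
     \<and> A = U * diagm n ds * U\<^sup>T"
  using assms
proof (induction n arbitrary: A)
  case 0
  show ?case
    by (rule exI[of _ "1\<^sub>m 0"], rule exI[of _ "[]"]) (use 0 in \<open>auto intro!: eq_matI simp: diagm_def\<close>)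
next
  case (Suc n A)
  have A: "A \<in> carrier_mat (Suc n) (Suc n)" and sym: "A\<^sup>T = A" using Suc by auto
  define R where "R = {x. poly (char_poly A) x = 0}"
  have "char_poly A \<noteq> 0" using degree_monic_char_poly[OF A] by auto
  hence finR: "finite R" unfolding R_def by (rule poly_roots_finite)
  have "R \<noteq> {}" using sym_real_root[OF A sym] unfolding R_def by auto
  define lam where "lam = Min R"
  have lamR: "poly (char_poly A) lam = 0" using Min_in[OF finR \<open>R \<noteq> {}\<close>] unfolding lam_def R_def by auto
  have lammin: "lam \<le> x" if "poly (char_poly A) x = 0" for x
    using Min_le[OF finR] that unfolding lam_def R_def by auto
  have "eigenvalue A lam" using eigenvalue_root_char_poly[OF A] lamR by simp
  then obtain v0 where v0: "v0 \<in> carrier_vec (Suc n)" "v0 \<noteq> 0\<^sub>v (Suc n)" "A *\<^sub>v v0 = lam \<cdot>\<^sub>v v0"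
    unfolding eigenvalue_def eigenvector_def using A by auto
  define v where "v = (1/sqrt(v0\<bullet>v0)) \<cdot>\<^sub>v v0"
  have v: "v \<in> carrier_vec (Suc n)" unfolding v_def using v0 by auto
  have vv: "v \<bullet> v = 1" unfolding v_def by (rule normalize_unit[OF v0(1,2)])
  have vnz: "v \<noteq> 0\<^sub>v (Suc n)" using vv by auto
  have Av: "A *\<^sub>v v = lam \<cdot>\<^sub>v v" unfolding v_def using v0 A
    by (simp add: mult_mat_vec smult_smult_assoc mult.commute)
  obtain W where W: "W \<in> carrier_mat (Suc n) (Suc n)" and WW: "W\<^sup>T * W = 1\<^sub>m (Suc n)"
    and W0: "col W 0 = v" using orth_completion[OF v vnz vv] by blast
  have WT: "W\<^sup>T \<in> carrier_mat (Suc n) (Suc n)" using W by auto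
  have WW': "W * W\<^sup>T = 1\<^sub>m (Suc n)" using mat_mult_left_right_inverse[OF WT W WW] .
  define A' where "A' = W\<^sup>T * A * W"
  have A'c: "A' \<in> carrier_mat (Suc n) (Suc n)" unfolding A'_def using W A by auto
  have A'sym: "A'\<^sup>T = A'"
  proof -
    have WA: "W\<^sup>T * A \<in> carrier_mat (Suc n) (Suc n)" using W A by auto
    have "A'\<^sup>T = W\<^sup>T * (W\<^sup>T * A)\<^sup>T" unfolding A'_def by (rule transpose_mult[OF WA W])
    also have "(W\<^sup>T * A)\<^sup>T = A\<^sup>T * W" using transpose_mult[OF WT A] by simp
    finally show ?thesis unfolding A'_def using sym W A by (simp add: assoc_mult_mat[of _ "Suc n" "Suc n"])
  qed
  have AA': "A = W * A' * W\<^sup>T"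
  proof -
    have c: "W\<^sup>T * A \<in> carrier_mat (Suc n) (Suc n)" "A * W \<in> carrier_mat (Suc n) (Suc n)"
      "W\<^sup>T * (A * W) \<in> carrier_mat (Suc n) (Suc n)" "W * W\<^sup>T \<in> carrier_mat (Suc n) (Suc n)"
      "A * (W * W\<^sup>T) \<in> carrier_mat (Suc n) (Suc n)" "W\<^sup>T * (A * W) * W\<^sup>T \<in> carrier_mat (Suc n) (Suc n)"
      using W A by auto
    have "W * A' * W\<^sup>T = W * (W\<^sup>T * (A * W)) * W\<^sup>T" unfolding A'_def
      using assoc_mult_mat[OF WT A W] by simp
    also have "\<dots> = W * (W\<^sup>T * (A * W) * W\<^sup>T)" using assoc_mult_mat[OF W c(3) WT] .
    also have "W\<^sup>T * (A * W) * W\<^sup>T = W\<^sup>T * (A * (W * W\<^sup>T))"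
      using assoc_mult_mat[OF WT c(2) WT] assoc_mult_mat[OF A W WT] by simp
    also have "W * \<dots> = (W * W\<^sup>T) * A * (W * W\<^sup>T)"
      using assoc_mult_mat[OF c(4) A c(4)] assoc_mult_mat[OF W WT c(5)] by simp
    finally have "W * A' * W\<^sup>T = (W * W\<^sup>T) * A * (W * W\<^sup>T)" .
    thus ?thesis using WW' A by simp
  qed
  have col0: "A' $$ (i,0) = (if i = 0 then lam else 0)" if i: "i < Suc n" for i
  proof -
    have "A' $$ (i,0) = (W\<^sup>T * (A * W)) $$ (i,0)" unfolding A'_def using W A by simp
    also have "\<dots> = col W i \<bullet> (A *\<^sub>v col W 0)" using W A i by (simp add: mult_mat_vec_def)
    also have "\<dots> = lam * (col W i \<bullet> col W 0)" unfolding W0 Av using W v i by simp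
    also have "col W i \<bullet> col W 0 = (W\<^sup>T * W) $$ (i,0)" using W i by simp
    finally show ?thesis using WW i by simp
  qed
  have row0: "A' $$ (0,j) = (if j = 0 then lam else 0)" if j: "j < Suc n" for j
  proof -
    have "A' $$ (0,j) = A'\<^sup>T $$ (j,0)" using A'c j by simp
    thus ?thesis using A'sym col0[OF j] by simp
  qed
  obtain A1 A2 A0 A3 where sb: "split_block A' 1 1 = (A1,A2,A0,A3)"
    by (cases "split_block A' 1 1", auto)
  have dims: "dim_row A' = 1 + n" "dim_col A' = 1 + n" using A'c by auto
  note spl = split_block[OF sb dims]
  have A1: "A1 = mat 1 1 (\<lambda>_. lam)" using sb col0[of 0] unfolding split_block_def Let_def
    by (auto intro!: eq_matI)
  have A2: "A2 = 0\<^sub>m 1 n" using sb row0 dims unfolding split_block_def Let_def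
    by (auto intro!: eq_matI)
  have A0: "A0 = 0\<^sub>m n 1" using sb col0 dims unfolding split_block_def Let_def
    by (auto intro!: eq_matI)
  have A3c: "A3 \<in> carrier_mat n n" using spl by simp
  have A3e: "A3 $$ (i,j) = A' $$ (Suc i, Suc j)" if "i < n" "j < n" for i j
    using sb dims that unfolding split_block_def Let_def by auto
  have A3sym: "A3\<^sup>T = A3"
  proof (rule eq_matI)
    fix i j assume "i < dim_row A3" "j < dim_col A3"
    hence ij: "i < n" "j < n" using A3c by auto
    have "A' $$ (Suc j, Suc i) = A'\<^sup>T $$ (Suc i, Suc j)" using A'c ij by simp
    thus "A3\<^sup>T $$ (i,j) = A3 $$ (i,j)" using A3e ij A3c A'sym by simp
  qed (use A3c in auto)
  from Suc.IH[OF A3c A3sym] obtain U' ds' where U': "U' \<in> carrier_mat n n" and UU': "U'\<^sup>T * U' = 1\<^sub>m n"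
    and len': "length ds' = n" and s': "sorted ds'" and A3d: "A3 = U' * diagm n ds' * U'\<^sup>T" by blast
  have A'b: "A' = four_block_mat A1 (0\<^sub>m 1 n) (0\<^sub>m n 1) A3" using spl A2 A0 by simp
  have A1c: "A1 \<in> carrier_mat 1 1" unfolding A1 by simp
  have "similar_mat_wit A A' W (W\<^sup>T)"
    by (rule similar_mat_witI[OF WW' WW AA' A A'c W WT])
  hence "char_poly A = char_poly A'" using char_poly_similar unfolding similar_mat_def by blast
  also have "\<dots> = char_poly A1 * char_poly A3" unfolding A'b
    by (rule char_poly_four_block_zeros_col[OF A1c _ A3c]) simp
  finally have cpA: "char_poly A = char_poly A1 * char_poly A3" .
  have cp3: "char_poly A3 = (\<Prod>d\<leftarrow>ds'. [:-d,1:])" by (rule decomp_charpoly[OF U' UU' len' A3d])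
  have lamle: "lam \<le> d" if "d \<in> set ds'" for d
  proof (rule lammin)
    have "poly (\<Prod>d\<leftarrow>ds'. [:-d,1:]) d = 0" using that
      by (induction ds') auto
    thus "poly (char_poly A) d = 0" unfolding cpA cp3 by simp
  qed
  have c1: "1\<^sub>m 1 \<in> carrier_mat 1 1" "0\<^sub>m 1 n \<in> carrier_mat 1 n" "0\<^sub>m n 1 \<in> carrier_mat n 1"
    "U'\<^sup>T \<in> carrier_mat n n" "diagm n ds' \<in> carrier_mat n n" "U' * diagm n ds' \<in> carrier_mat n n"
    using U' by auto
  define B where "B = four_block_mat (1\<^sub>m 1) (0\<^sub>m 1 n) (0\<^sub>m n 1) U'"
  have Bc: "B \<in> carrier_mat (Suc n) (Suc n)" unfolding B_def using U' by auto
  have BT: "B\<^sup>T = four_block_mat (1\<^sub>m 1) (0\<^sub>m 1 n) (0\<^sub>m n 1) U'\<^sup>T" unfolding B_def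
    by (subst transpose_four_block_mat[of _ 1 1 _ n _ n]) (use U' in auto)
  have BTc: "B\<^sup>T \<in> carrier_mat (Suc n) (Suc n)" using Bc by auto
  have BB: "B\<^sup>T * B = 1\<^sub>m (Suc n)"
  proof -
    have "B\<^sup>T * B = four_block_mat (1\<^sub>m 1) (0\<^sub>m 1 n) (0\<^sub>m n 1) (1\<^sub>m n)" unfolding BT unfolding B_def
      by (subst mult_four_block_mat[OF c1(1-4) c1(1-3) U']) (use U' UU' in auto)
    thus ?thesis by simp
  qed
  define Dg where "Dg = four_block_mat A1 (0\<^sub>m 1 n) (0\<^sub>m n 1) (diagm n ds')"
  have Dg: "Dg = diagm (Suc n) (lam # ds')" unfolding Dg_def A1
    by (rule eq_matI) (auto simp: diagm_def)
  have A'B: "A' = B * Dg * B\<^sup>T"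
  proof -
    have "B * Dg = four_block_mat A1 (0\<^sub>m 1 n) (0\<^sub>m n 1) (U' * diagm n ds')"
      unfolding B_def Dg_def
      by (subst mult_four_block_mat[OF c1(1-3) U' A1c c1(2-3,5)]) (use U' A1c c1 in auto)
    also have "\<dots> * B\<^sup>T = four_block_mat A1 (0\<^sub>m 1 n) (0\<^sub>m n 1) (U' * diagm n ds' * U'\<^sup>T)"
      unfolding BT
      by (subst mult_four_block_mat[OF A1c c1(2-3,6) c1(1-4)]) (use U' A1c c1 in auto)
    finally show ?thesis unfolding A'b A3d by simp
  qed
  define U where "U = W * B"
  have Uc: "U \<in> carrier_mat (Suc n) (Suc n)" unfolding U_def using W Bc by auto
  have UTe: "U\<^sup>T = B\<^sup>T * W\<^sup>T" unfolding U_def by (rule transpose_mult[OF W Bc])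
  have UU: "U\<^sup>T * U = 1\<^sub>m (Suc n)"
  proof -
    have "U\<^sup>T * U = B\<^sup>T * (W\<^sup>T * W) * B" unfolding UTe unfolding U_def
      by (rule assoc4[OF WT BTc W Bc])
    thus ?thesis using WW BB Bc by simp
  qed
  have AU: "A = U * Dg * U\<^sup>T"
  proof -
    have Dgc: "Dg \<in> carrier_mat (Suc n) (Suc n)" unfolding Dg by simp
    have "A = W * (B * Dg * B\<^sup>T) * W\<^sup>T" using AA' A'B by simp
    also have "\<dots> = (W * B) * Dg * (B\<^sup>T * W\<^sup>T)" by (rule assoc5[OF W Bc Dgc BTc WT])
    finally show ?thesis using UTe unfolding U_def by simp
  qed
  have "sorted (lam # ds')" using s' lamle by simp
  thus ?case using Uc UU AU len' unfolding Dg by (intro exI[of _ U] exI[of _ "lam # ds'"]) auto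
qed

definition quad :: "real mat \<Rightarrow> real vec \<Rightarrow> real" where "quad M x = x \<bullet> (M *\<^sub>v x)"

lemma vv_pos: fixes u :: "real vec" assumes "u \<in> carrier_vec n" "u \<noteq> 0\<^sub>v n" shows "u \<bullet> u > 0"
proof -
  have "u \<bullet> u \<noteq> 0" using assms by (metis conjugate_square_eq_0_vec real_cscalar) 
  moreover have "u \<bullet> u \<ge> 0" by (simp add: scalar_prod_def sum_nonneg)
  ultimately show ?thesis by linarith
qed

lemma decomp_quad:
  fixes A U :: "real mat"
  assumes U: "U \<in> carrier_mat n n" and UU: "U\<^sup>T * U = 1\<^sub>m n" and len: "length ds = n"
    and A: "A = U * diagm n ds * U\<^sup>T" and x: "x \<in> carrier_vec n"
  shows "quad A x = (\<Sum>i<n. ds!i * ((U\<^sup>T *\<^sub>v x)$i)^2)" "x \<bullet> x = (\<Sum>i<n. ((U\<^sup>T *\<^sub>v x)$i)^2)"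
proof -
  have UT: "U\<^sup>T \<in> carrier_mat n n" using U by auto
  have UU': "U * U\<^sup>T = 1\<^sub>m n" using mat_mult_left_right_inverse[OF UT U UU] .
  define y where "y = U\<^sup>T *\<^sub>v x"
  have y: "y \<in> carrier_vec n" unfolding y_def using UT x by auto
  have Dy: "diagm n ds *\<^sub>v y \<in> carrier_vec n" using mult_mat_vec_carrier[OF diagm_carrier y] .
  have "A *\<^sub>v x = U *\<^sub>v (diagm n ds *\<^sub>v y)" unfolding A y_def
    using U UT x by (simp add: assoc_mult_mat_vec[of _ n n _ n])
  hence "quad A x = x \<bullet> (U *\<^sub>v (diagm n ds *\<^sub>v y))" unfolding quad_def by simp
  also have "\<dots> = y \<bullet> (diagm n ds *\<^sub>v y)"
    using transpose_vec_mult_scalar[OF U Dy x] unfolding y_def[symmetric] by simp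
  also have "\<dots> = (\<Sum>i<n. ds!i * (y$i)^2)"
  proof -
    have Dyi: "(diagm n ds *\<^sub>v y) $ i = ds!i * y$i" if i: "i < n" for i
    proof -
      have "(diagm n ds *\<^sub>v y) $ i = (\<Sum>j = 0..<n. (if i = j then ds!i else 0) * y$j)"
        using y i by (auto simp: diagm_def scalar_prod_def intro!: sum.cong)
      also have "\<dots> = (\<Sum>j = 0..<n. if i = j then ds!i * y$j else 0)" by (rule sum.cong) auto
      also have "\<dots> = ds!i * y$i" using i by simp
      finally show ?thesis .
    qed
    show ?thesis using y Dyi by (simp add: scalar_prod_def power2_eq_square lessThan_atLeast0 algebra_simps)
  qed
  finally show "quad A x = (\<Sum>i<n. ds!i * ((U\<^sup>T *\<^sub>v x)$i)^2)" unfolding y_def .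
  have "U *\<^sub>v y = x" unfolding y_def using U UT x UU'
    by (simp add: assoc_mult_mat_vec[symmetric, of _ n n _ n])
  hence "x \<bullet> x = x \<bullet> (U *\<^sub>v y)" by simp
  also have "\<dots> = y \<bullet> y" using transpose_vec_mult_scalar[OF U y x] unfolding y_def[symmetric] by simp
  also have "\<dots> = (\<Sum>i<n. (y$i)^2)" using y by (simp add: scalar_prod_def power2_eq_square lessThan_atLeast0)
  finally show "x \<bullet> x = (\<Sum>i<n. ((U\<^sup>T *\<^sub>v x)$i)^2)" unfolding y_def .
qed

definition "sdec A U ds n \<longleftrightarrow> U \<in> carrier_mat n n \<and> U\<^sup>T * U = 1\<^sub>m n \<and> length ds = n \<and> sorted ds
   \<and> A = U * diagm n ds * U\<^sup>T"

lemma sdec_exists: fixes A :: "real mat" assumes "A \<in> carrier_mat n n" "A\<^sup>T = A" shows "\<exists>U ds. sdec A U ds n"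
  using spectral[OF assms] unfolding sdec_def by blast

lemma sdec_eig: assumes "sdec A U ds n" "1 \<le> k" shows "eig A k = ds ! (k - 1)"
  using eigs_decomp assms unfolding sdec_def eig_def by metis

lemma ray_max:
  assumes d: "sdec A U ds n" and n: "n > 0" and x: "x \<in> carrier_vec n"
  shows "quad A x \<le> ds!(n-1) * (x \<bullet> x)"
proof -
  from d have U: "U \<in> carrier_mat n n" and UU: "U\<^sup>T * U = 1\<^sub>m n" and len: "length ds = n"
    and s: "sorted ds" and A: "A = U * diagm n ds * U\<^sup>T" unfolding sdec_def by auto
  have "quad A x = (\<Sum>i<n. ds!i * ((U\<^sup>T *\<^sub>v x)$i)^2)" using decomp_quad[OF U UU len A x] by simp
  also have "\<dots> \<le> (\<Sum>i<n. ds!(n-1) * ((U\<^sup>T *\<^sub>v x)$i)^2)"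
  proof (rule sum_mono)
    fix i assume "i \<in> {..<n}"
    hence "ds!i \<le> ds!(n-1)" using s len n by (intro sorted_nth_mono) auto
    thus "ds!i * ((U\<^sup>T *\<^sub>v x)$i)^2 \<le> ds!(n-1) * ((U\<^sup>T *\<^sub>v x)$i)^2" by (simp add: mult_right_mono)
  qed
  also have "\<dots> = ds!(n-1) * (x \<bullet> x)" using decomp_quad[OF U UU len A x] by (simp add: sum_distrib_left)
  finally show ?thesis .
qed

lemma ray_top:
  assumes d: "sdec A U ds n" and n: "n > 0"
  shows "\<exists>v \<in> carrier_vec n. v \<bullet> v = 1 \<and> quad A v = ds!(n-1)"
proof -
  from d have U: "U \<in> carrier_mat n n" and UU: "U\<^sup>T * U = 1\<^sub>m n" and len: "length ds = n"
    and s: "sorted ds" and A: "A = U * diagm n ds * U\<^sup>T" unfolding sdec_def by auto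
  define e where "e = (unit_vec n (n-1) :: real vec)"
  have e: "e \<in> carrier_vec n" unfolding e_def by simp
  define v where "v = U *\<^sub>v e"
  have v: "v \<in> carrier_vec n" unfolding v_def using U e by auto
  have Uv: "U\<^sup>T *\<^sub>v v = e" unfolding v_def using U e UU
    by (simp add: assoc_mult_mat_vec[symmetric, of _ n n _ n])
  have ei: "(\<Sum>i<n. f i * (e$i)^2) = f (n-1)" for f :: "nat \<Rightarrow> real"
  proof -
    have "(\<Sum>i<n. f i * (e$i)^2) = (\<Sum>i<n. if i = n-1 then f i else 0)"
      by (rule sum.cong) (auto simp: e_def)
    thus ?thesis using n by simp
  qed
  have "v \<bullet> v = 1" using decomp_quad(2)[OF U UU len A v] ei[of "\<lambda>_. 1"] unfolding Uv by simp
  moreover have "quad A v = ds!(n-1)" using decomp_quad(1)[OF U UU len A v] ei[of "\<lambda>i. ds!i"] unfolding Uv by simp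
  ultimately show ?thesis using v by blast
qed

lemma ray_perp0:
  assumes d: "sdec A U ds n" and n: "n \<ge> 2" and z: "z \<in> carrier_vec n" and ze: "z \<bullet> col U 0 = 0"
  shows "ds!1 * (z \<bullet> z) \<le> quad A z"
proof -
  from d have U: "U \<in> carrier_mat n n" and UU: "U\<^sup>T * U = 1\<^sub>m n" and len: "length ds = n"
    and s: "sorted ds" and A: "A = U * diagm n ds * U\<^sup>T" unfolding sdec_def by auto
  have cU: "col U 0 \<in> carrier_vec n" using U by auto
  have y0: "(U\<^sup>T *\<^sub>v z) $ 0 = 0" using U z ze n comm_scalar_prod[OF z cU] by simp
  have "ds!1 * (z \<bullet> z) = (\<Sum>i<n. ds!1 * ((U\<^sup>T *\<^sub>v z)$i)^2)"
    using decomp_quad[OF U UU len A z] by (simp add: sum_distrib_left)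
  also have "\<dots> \<le> (\<Sum>i<n. ds!i * ((U\<^sup>T *\<^sub>v z)$i)^2)"
  proof (rule sum_mono)
    fix i assume i: "i \<in> {..<n}"
    show "ds!1 * ((U\<^sup>T *\<^sub>v z)$i)^2 \<le> ds!i * ((U\<^sup>T *\<^sub>v z)$i)^2"
    proof (cases "i = 0")
      case True thus ?thesis using y0 by simp
    next
      case False
      hence "ds!1 \<le> ds!i" using s len i by (intro sorted_nth_mono) auto
      thus ?thesis by (simp add: mult_right_mono)
    qed
  qed
  also have "\<dots> = quad A z" using decomp_quad[OF U UU len A z] by simp
  finally show ?thesis .
qed

lemma ray_second:
  assumes d: "sdec A U ds n" and n: "n \<ge> 2" and sym: "A\<^sup>T = A"
    and u: "u \<in> carrier_vec n" "u \<noteq> 0\<^sub>v n" "A *\<^sub>v u = 0\<^sub>v n"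
    and x: "x \<in> carrier_vec n" and xu: "x \<bullet> u = 0"
  shows "ds!1 \<le> 0 \<or> ds!1 * (x \<bullet> x) \<le> quad A x"
proof -
  from d have U: "U \<in> carrier_mat n n" and A: "A \<in> carrier_mat n n" unfolding sdec_def by auto
  define e where "e = col U 0"
  have e: "e \<in> carrier_vec n" unfolding e_def using U by auto
  show ?thesis
  proof (cases "x \<bullet> e = 0")
    case True thus ?thesis using ray_perp0[OF d n x] unfolding e_def by auto
  next
    case False
    define a where "a = x \<bullet> e"
    define b where "b = - (u \<bullet> e)"
    define z where "z = a \<cdot>\<^sub>v u + b \<cdot>\<^sub>v x"
    have zc: "z \<in> carrier_vec n" unfolding z_def using u x by auto
    have ze: "z \<bullet> col U 0 = 0" unfolding z_def e_def[symmetric] a_def b_def using u x e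
      by (simp add: add_scalar_prod_distrib[of _ n] smult_scalar_prod_distrib)
    have uAx: "u \<bullet> (A *\<^sub>v x) = 0"
    proof -
      have "u \<bullet> (A *\<^sub>v x) = (A\<^sup>T *\<^sub>v u) \<bullet> x" using transpose_vec_mult_scalar[OF A x u(1)] by simp
      thus ?thesis using sym u x by simp
    qed
    have Az: "A *\<^sub>v z = b \<cdot>\<^sub>v (A *\<^sub>v x)" unfolding z_def using A u x
      by (simp add: mult_add_distrib_mat_vec[of _ n n] mult_mat_vec) (rule eq_vecI, use A x in auto)
    have qz: "quad A z = b^2 * quad A x" unfolding quad_def Az unfolding z_def using A u x uAx
      by (simp add: add_scalar_prod_distrib[of _ n] smult_scalar_prod_distrib scalar_prod_smult_distrib power2_eq_square)
    have ux: "u \<bullet> x = 0" using xu comm_scalar_prod[OF x u(1)] by simp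
    have zz: "z \<bullet> z = a^2 * (u \<bullet> u) + b^2 * (x \<bullet> x)" unfolding z_def using u x ux xu
      by (simp add: add_scalar_prod_distrib[of _ n] scalar_prod_add_distrib[of _ n]
          smult_scalar_prod_distrib scalar_prod_smult_distrib power2_eq_square)
    have key: "ds!1 * (a^2 * (u \<bullet> u) + b^2 * (x \<bullet> x)) \<le> b^2 * quad A x"
      using ray_perp0[OF d n zc ze] unfolding qz zz .
    have uu: "u \<bullet> u > 0" using vv_pos[OF u(1,2)] .
    have a0: "a \<noteq> 0" using False unfolding a_def .
    have xx: "x \<bullet> x \<ge> 0" by (simp add: scalar_prod_def sum_nonneg)
    show ?thesis
    proof (cases "ds!1 \<le> 0")
      case True thus ?thesis by simp
    next
      case False
      have pa: "a^2 * (u \<bullet> u) > 0" using a0 uu by simp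
      have b0: "b \<noteq> 0"
      proof
        assume "b = 0"
        hence "ds!1 * (a^2 * (u \<bullet> u)) \<le> 0" using key by simp
        moreover have "ds!1 * (a^2 * (u \<bullet> u)) > 0" using False pa by simp
        ultimately show False by simp
      qed
      have h: "0 \<le> ds!1 * (a^2 * (u \<bullet> u))" using False pa uu by (intro mult_nonneg_nonneg) auto
      have "ds!1 * (a^2 * (u \<bullet> u) + b^2 * (x \<bullet> x)) = ds!1 * (a^2 * (u \<bullet> u)) + b^2 * (ds!1 * (x \<bullet> x))"
        by (simp add: algebra_simps)
      hence "b^2 * (ds!1 * (x \<bullet> x)) \<le> ds!1 * (a^2 * (u \<bullet> u) + b^2 * (x \<bullet> x))"
        using h by linarith
      hence "b^2 * (ds!1 * (x \<bullet> x)) \<le> b^2 * quad A x" using key by linarith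
      hence "ds!1 * (x \<bullet> x) \<le> quad A x" using b0 by simp
      thus ?thesis by simp
    qed
  qed
qed

lemma lap_dims[simp]: "dim_row (laplacian N E) = N" "dim_col (laplacian N E) = N" unfolding laplacian_def by auto
lemma diagw_dims[simp]: "dim_row (diag_w N w) = N" "dim_col (diag_w N w) = N" unfolding diag_w_def by auto
lemma lap_carrier[simp]: "laplacian N E \<in> carrier_mat N N" unfolding laplacian_def by auto
lemma diagw_carrier[simp]: "diag_w N w \<in> carrier_mat N N" unfolding diag_w_def by auto

lemma lap_sym: assumes "simple_graph N E" shows "(laplacian N E)\<^sup>T = laplacian N E"
  using assms unfolding simple_graph_def laplacian_def by (auto intro!: eq_matI)

lemma lap_one: assumes g: "simple_graph N E"
  shows "laplacian N E *\<^sub>v vec N (\<lambda>_. 1) = 0\<^sub>v N"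
proof (rule eq_vecI)
  fix i assume "i < dim_vec (0\<^sub>v N :: real vec)"
  hence i: "i < N" by simp
  have nE: "\<not> E i i" using g i unfolding simple_graph_def by auto
  have "(laplacian N E *\<^sub>v vec N (\<lambda>_. 1)) $ i = (\<Sum>j = 0..<N. laplacian N E $$ (i,j))"
    using i by (auto simp: mult_mat_vec_def scalar_prod_def row_def intro!: sum.cong)
  also have "\<dots> = (\<Sum>j = 0..<N. (if j = i then real (card {k. k < N \<and> E i k}) else 0)
       - (if E i j then 1 else 0))"
    using i nE by (intro sum.cong refl) (auto simp: laplacian_def)
  also have "\<dots> = real (card {k. k < N \<and> E i k}) - (\<Sum>j = 0..<N. (if E i j then 1 else 0))"
    using i by (simp add: sum_subtractf)
  also have "(\<Sum>j = 0..<N. (if E i j then 1 else 0)) = real (card {k. k < N \<and> E i k})"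
  proof -
    have "(\<Sum>j = 0..<N. (if E i j then 1 else 0 :: real)) = (\<Sum>j \<in> {0..<N} \<inter> {k. E i k}. 1)"
      by (simp add: sum.If_cases)
    also have "{0..<N} \<inter> {k. E i k} = {k. k < N \<and> E i k}" by auto
    finally show ?thesis by simp
  qed
  finally show "(laplacian N E *\<^sub>v vec N (\<lambda>_. 1)) $ i = 0\<^sub>v N $ i" using i by simp
qed auto

lemma quad_comb:
  fixes L :: "real mat"
  assumes L: "L \<in> carrier_mat n n" and sym: "L\<^sup>T = L" and ov: "ov \<in> carrier_vec n" and Lovv: "L *\<^sub>v ov = 0\<^sub>v n"
    and d: "d \<in> carrier_vec n"
  shows "quad L (a \<cdot>\<^sub>v ov + b \<cdot>\<^sub>v d) = b^2 * quad L d"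
proof -
  have ovLd: "ov \<bullet> (L *\<^sub>v d) = 0"
  proof -
    have "ov \<bullet> (L *\<^sub>v d) = (L\<^sup>T *\<^sub>v ov) \<bullet> d" using transpose_vec_mult_scalar[OF L d ov] by simp
    thus ?thesis using sym ov d Lovv by simp
  qed
  have "L *\<^sub>v (a \<cdot>\<^sub>v ov + b \<cdot>\<^sub>v d) = b \<cdot>\<^sub>v (L *\<^sub>v d)" using L ov d Lovv
    by (simp add: mult_add_distrib_mat_vec[of _ n n] mult_mat_vec) (rule eq_vecI, use L d in auto)
  thus ?thesis unfolding quad_def using L ov d ovLd
    by (simp add: add_scalar_prod_distrib[of _ n] smult_scalar_prod_distrib scalar_prod_smult_distrib power2_eq_square)
qed

lemma mpx_carrier: assumes "L1 \<in> carrier_mat N N" "L2 \<in> carrier_mat N N"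
  shows "multiplex_laplacian N L1 L2 w \<in> carrier_mat (2*N) (2*N)"
  using assms unfolding multiplex_laplacian_def by (auto simp: mult_2)

lemma mpx_sym: assumes "L1 \<in> carrier_mat N N" "L2 \<in> carrier_mat N N" "L1\<^sup>T = L1" "L2\<^sup>T = L2"
  shows "(multiplex_laplacian N L1 L2 w)\<^sup>T = multiplex_laplacian N L1 L2 w"
proof -
  have W: "diag_w N w \<in> carrier_mat N N" by simp
  have WT: "(diag_w N w)\<^sup>T = diag_w N w" unfolding diag_w_def by (auto intro!: eq_matI)
  have WT': "(- diag_w N w)\<^sup>T = - diag_w N w" unfolding diag_w_def by (auto intro!: eq_matI)
  show ?thesis unfolding multiplex_laplacian_def
    by (subst transpose_four_block_mat[of _ N N _ N _ N]) (use assms W WT WT' in \<open>auto simp: transpose_add\<close>)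
qed

lemma diagw_mult: assumes p: "p \<in> carrier_vec N"
  shows "diag_w N w *\<^sub>v p = vec N (\<lambda>i. w i * p$i)" "(- diag_w N w) *\<^sub>v p = vec N (\<lambda>i. - (w i * p$i))"
proof -
  have e: "(\<Sum>j = 0..<N. (if i = j then w i else 0) * p$j) = w i * p$i" if i: "i < N" for i
  proof -
    have "(\<Sum>j = 0..<N. (if i = j then w i else 0) * p$j) = (\<Sum>j = 0..<N. if i = j then w i * p$j else 0)"
      by (rule sum.cong) auto
    also have "\<dots> = w i * p$i" using i by simp
    finally show ?thesis .
  qed
  have e2: "(\<Sum>j = 0..<N. - (if i = j then w i else 0) * p$j) = - (w i * p$i)" if i: "i < N" for i
    using e[OF i] by (simp add: sum_negf)
  show "diag_w N w *\<^sub>v p = vec N (\<lambda>i. w i * p$i)"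
    by (rule eq_vecI) (use p e in \<open>auto simp: mult_mat_vec_def scalar_prod_def row_def diag_w_def intro!: sum.cong\<close>)
  show "(- diag_w N w) *\<^sub>v p = vec N (\<lambda>i. - (w i * p$i))"
    by (rule eq_vecI) (use p e2 in \<open>auto simp: mult_mat_vec_def scalar_prod_def row_def diag_w_def intro!: sum.cong\<close>)
qed

lemma mpx_mult:
  assumes L1: "L1 \<in> carrier_mat N N" and L2: "L2 \<in> carrier_mat N N"
    and p: "p \<in> carrier_vec N" and q: "q \<in> carrier_vec N"
  shows "multiplex_laplacian N L1 L2 w *\<^sub>v (p @\<^sub>v q) =
     (L1 *\<^sub>v p + vec N (\<lambda>i. w i * (p$i - q$i))) @\<^sub>v (L2 *\<^sub>v q + vec N (\<lambda>i. w i * (q$i - p$i)))"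
proof -
  have W: "diag_w N w \<in> carrier_mat N N" "- diag_w N w \<in> carrier_mat N N" by auto
  have "multiplex_laplacian N L1 L2 w *\<^sub>v (p @\<^sub>v q) =
     ((L1 + diag_w N w) *\<^sub>v p + (- diag_w N w) *\<^sub>v q) @\<^sub>v ((- diag_w N w) *\<^sub>v p + (L2 + diag_w N w) *\<^sub>v q)"
    unfolding multiplex_laplacian_def
    by (rule four_block_mat_mult_vec) (use L1 L2 p q in auto)
  also have "(L1 + diag_w N w) *\<^sub>v p + (- diag_w N w) *\<^sub>v q = L1 *\<^sub>v p + vec N (\<lambda>i. w i * (p$i - q$i))"
    unfolding add_mult_distrib_mat_vec[OF L1 W(1) p] diagw_mult[OF p] diagw_mult[OF q]
    by (rule eq_vecI) (use L1 p q in \<open>auto simp: algebra_simps\<close>)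
  also have "(- diag_w N w) *\<^sub>v p + (L2 + diag_w N w) *\<^sub>v q = L2 *\<^sub>v q + vec N (\<lambda>i. w i * (q$i - p$i))"
    unfolding add_mult_distrib_mat_vec[OF L2 W(1) q] diagw_mult[OF p] diagw_mult[OF q]
    by (rule eq_vecI) (use L2 p q in \<open>auto simp: algebra_simps\<close>)
  finally show ?thesis .
qed

lemma mpx_quad:
  assumes L1: "L1 \<in> carrier_mat N N" and L2: "L2 \<in> carrier_mat N N"
    and p: "p \<in> carrier_vec N" and q: "q \<in> carrier_vec N"
  shows "quad (multiplex_laplacian N L1 L2 w) (p @\<^sub>v q) = quad L1 p + quad L2 q + (\<Sum>i<N. w i * (p$i - q$i)^2)"
proof -
  have c: "L1 *\<^sub>v p \<in> carrier_vec N" "L2 *\<^sub>v q \<in> carrier_vec N" using L1 L2 p q by auto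
  have "quad (multiplex_laplacian N L1 L2 w) (p @\<^sub>v q) =
      p \<bullet> (L1 *\<^sub>v p + vec N (\<lambda>i. w i * (p$i - q$i))) + q \<bullet> (L2 *\<^sub>v q + vec N (\<lambda>i. w i * (q$i - p$i)))"
    unfolding quad_def mpx_mult[OF assms] by (rule scalar_prod_append) (use p q c in auto)
  also have "\<dots> = quad L1 p + quad L2 q + (p \<bullet> vec N (\<lambda>i. w i * (p$i - q$i)) + q \<bullet> vec N (\<lambda>i. w i * (q$i - p$i)))"
    unfolding quad_def using p q c by (simp add: scalar_prod_add_distrib[of _ N])
  also have "p \<bullet> vec N (\<lambda>i. w i * (p$i - q$i)) + q \<bullet> vec N (\<lambda>i. w i * (q$i - p$i)) = (\<Sum>i<N. w i * (p$i - q$i)^2)"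
    using p q by (simp add: scalar_prod_def lessThan_atLeast0 sum.distrib[symmetric] power2_eq_square algebra_simps)
  finally show ?thesis .
qed

lemma mpx_one:
  assumes L1: "L1 \<in> carrier_mat N N" and L2: "L2 \<in> carrier_mat N N"
    and o1: "L1 *\<^sub>v vec N (\<lambda>_. 1) = 0\<^sub>v N" and o2: "L2 *\<^sub>v vec N (\<lambda>_. 1) = 0\<^sub>v N"
  shows "multiplex_laplacian N L1 L2 w *\<^sub>v (vec N (\<lambda>_. 1) @\<^sub>v vec N (\<lambda>_. 1)) = 0\<^sub>v (2*N)"
  unfolding mpx_mult[OF L1 L2 vec_carrier vec_carrier] o1 o2
  by (rule eq_vecI) auto

lemma top_bound:
  assumes L1: "L1 \<in> carrier_mat N N" and L2: "L2 \<in> carrier_mat N N" and N: "N \<ge> 1"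
    and d: "sdec (multiplex_laplacian N L1 L2 w) U ds (2*N)"
    and p: "p \<in> carrier_vec N" and q: "q \<in> carrier_vec N" and pq: "p \<bullet> p + q \<bullet> q = 1"
  shows "quad L1 p + quad L2 q + (\<Sum>i<N. w i * (p$i - q$i)^2) \<le> ds!(2*N-1)"
proof -
  have x: "p @\<^sub>v q \<in> carrier_vec (2*N)" using p q by (auto simp: mult_2)
  have "quad (multiplex_laplacian N L1 L2 w) (p @\<^sub>v q) \<le> ds!(2*N-1) * ((p @\<^sub>v q) \<bullet> (p @\<^sub>v q))"
    by (rule ray_max[OF d _ x]) (use N in auto)
  moreover have "(p @\<^sub>v q) \<bullet> (p @\<^sub>v q) = 1" using scalar_prod_append[OF p q p q] pq by simp
  ultimately show ?thesis unfolding mpx_quad[OF L1 L2 p q] by simp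
qed

lemma second_bound:
  assumes L1: "L1 \<in> carrier_mat N N" and L2: "L2 \<in> carrier_mat N N" and N: "N \<ge> 1"
    and s1: "L1\<^sup>T = L1" and s2: "L2\<^sup>T = L2"
    and o1: "L1 *\<^sub>v vec N (\<lambda>_. 1) = 0\<^sub>v N" and o2: "L2 *\<^sub>v vec N (\<lambda>_. 1) = 0\<^sub>v N"
    and d: "sdec (multiplex_laplacian N L1 L2 w) U ds (2*N)"
    and p: "p \<in> carrier_vec N" and q: "q \<in> carrier_vec N" and pq: "(\<Sum>i<N. p$i) + (\<Sum>i<N. q$i) = 0"
  shows "ds!1 \<le> 0 \<or> ds!1 * (p \<bullet> p + q \<bullet> q) \<le> quad L1 p + quad L2 q + (\<Sum>i<N. w i * (p$i - q$i)^2)"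
proof -
  let ?M = "multiplex_laplacian N L1 L2 w"
  let ?o = "vec N (\<lambda>_. 1::real)"
  have x: "p @\<^sub>v q \<in> carrier_vec (2*N)" using p q by (auto simp: mult_2)
  have u: "?o @\<^sub>v ?o \<in> carrier_vec (2*N)" by (auto simp: mult_2)
  have u0: "?o @\<^sub>v ?o \<noteq> 0\<^sub>v (2*N)"
  proof
    assume "?o @\<^sub>v ?o = 0\<^sub>v (2*N)"
    hence "(?o @\<^sub>v ?o) $ 0 = 0" using N by simp
    thus False using N by simp
  qed
  have xu: "(p @\<^sub>v q) \<bullet> (?o @\<^sub>v ?o) = 0" using scalar_prod_append[OF p q vec_carrier vec_carrier] pq p q
    by (simp add: scalar_prod_def lessThan_atLeast0)
  have "ds!1 \<le> 0 \<or> ds!1 * ((p @\<^sub>v q) \<bullet> (p @\<^sub>v q)) \<le> quad ?M (p @\<^sub>v q)"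
    by (rule ray_second[OF d _ mpx_sym[OF L1 L2 s1 s2] u u0 mpx_one[OF L1 L2 o1 o2] x xu]) (use N in auto)
  thus ?thesis unfolding mpx_quad[OF L1 L2 p q] scalar_prod_append[OF p q p q] .
qed

lemma arith2:
  fixes N c B D s :: real
  assumes N: "N \<ge> 1" and c: "c > 0" and B: "B \<ge> 4*c+1" and D: "D > (c/N)^2/4"
    and h: "s \<le> 0 \<or> s * (2*N + 2*D/B^2) \<le> 4*c - 7*D/B"
  shows "s \<le> 2*(c/N) - (c/N)^2/(8*N*B)"
proof -
  define a where "a = c/N"
  define e where "e = a^2/(8*N*B)"
  have a: "a > 0" "a * N = c" unfolding a_def using N c by auto
  have Bp: "B > 0" using B c by linarith
  have aB: "a \<le> B" unfolding a_def using N c B by (simp add: divide_le_eq) (smt (verit) mult_le_cancel_left1)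
  have Dp: "D > 0" using D a unfolding a_def by (smt (verit) zero_less_divide_iff zero_less_power)
  have e1: "e \<le> 2*a"
  proof -
    have "a^2 \<le> a * B" using aB a by (simp add: power2_eq_square)
    also have "\<dots> \<le> 16 * N * B * a" using a Bp N aB by (smt (verit) mult_le_cancel_left1 mult_pos_pos mult.commute mult.assoc)
    finally have "a^2 \<le> 2*a*(8*N*B)" by (simp add: algebra_simps)
    thus ?thesis unfolding e_def using Bp N by (simp add: divide_le_eq)
  qed
  have e2: "2*N*e < D/B"
  proof -
    have "2*N*e = a^2/(4*B)" unfolding e_def using N Bp by (simp add: field_simps)
    also have "\<dots> < D/B" using D Bp unfolding a_def by (simp add: field_simps)
    finally show ?thesis .
  qed
  have e3: "2*e*D/B^2 \<le> D/B"
  proof -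
    have eq: "2*e*D/B^2 = (a^2/(4*N*B^2)) * (D/B)" unfolding e_def using N Bp by (simp add: field_simps power2_eq_square)
    have "a^2 \<le> B^2" using aB a by (simp add: power_mono)
    also have "\<dots> \<le> 4*N*B^2" using mult_right_mono[of 1 "4*N" "B^2"] N by simp
    finally have t: "a^2/(4*N*B^2) \<le> 1" using N Bp by (simp add: divide_le_eq)
    have "0 \<le> D/B" using Dp Bp by simp
    from mult_right_mono[OF t this] have "(a^2/(4*N*B^2)) * (D/B) \<le> D/B" by simp
    thus ?thesis using eq by simp
  qed
  have X: "2*N + 2*D/B^2 > 0" using N Dp Bp by (smt (verit) divide_pos_pos zero_less_power)
  have key: "4*c - 7*D/B \<le> (2*a - e) * (2*N + 2*D/B^2)"
  proof -
    have "(2*a - e) * (2*N + 2*D/B^2) = 4*(a*N) + 4*a*D/B^2 - 2*N*e - 2*e*D/B^2"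
      by (simp add: algebra_simps add_divide_distrib diff_divide_distrib)
    moreover have "4*a*D/B^2 \<ge> 0" using a Dp by simp
    moreover have "D/B \<ge> 0" using Dp Bp by simp
    moreover have "4*(a*N) = 4*c" using a(2) by simp
    moreover have "7*D/B = 7*(D/B)" by simp
    moreover have gen: "\<And>P Q R S T. P = 4*c + Q - R - S \<Longrightarrow> 0 \<le> Q \<Longrightarrow> 0 \<le> T \<Longrightarrow> R < T \<Longrightarrow> S \<le> T
       \<Longrightarrow> 4*c - 7*T \<le> P" by linarith
    ultimately show ?thesis using e2 e3 by (metis (no_types, lifting))
  qed
  have fe: "2*(c/N) - (c/N)^2/(8*N*B) = 2*a - e" unfolding a_def e_def by simp
  have "s \<le> 2*a - e"
  proof (cases "s \<le> 0")
    case True thus ?thesis using e1 a by linarith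
  next
    case False
    hence "s * (2*N + 2*D/B^2) \<le> (2*a - e) * (2*N + 2*D/B^2)" using h key by linarith
    thus ?thesis using X by (simp add: mult_le_cancel_right)
  qed
  thus ?thesis using fe by simp
qed

lemma quad_zero[simp]: "L \<in> carrier_mat N N \<Longrightarrow> quad L (0\<^sub>v N) = 0"
  unfolding quad_def by simp

lemma quad_const:
  fixes L :: "real mat"
  assumes L: "L \<in> carrier_mat N N" and s: "L\<^sup>T = L" and o: "L *\<^sub>v vec N (\<lambda>_. 1) = 0\<^sub>v N"
  shows "quad L (vec N (\<lambda>_. k)) = 0"
proof -
  have "vec N (\<lambda>_. k) = k \<cdot>\<^sub>v vec N (\<lambda>_. 1) + 0 \<cdot>\<^sub>v vec N (\<lambda>_. 1)" by (rule eq_vecI) auto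
  thus ?thesis using quad_comb[OF L s vec_carrier o vec_carrier, of k 0] by simp
qed

lemma sum_sq: fixes v :: "real vec" assumes "v \<in> carrier_vec N" shows "v \<bullet> v = (\<Sum>i<N. (v$i)^2)"
  using assms by (simp add: scalar_prod_def lessThan_atLeast0 power2_eq_square)

lemma per_w:
  fixes L1 L2 :: "real mat" and w :: "nat \<Rightarrow> real"
  assumes N: "N \<ge> 1" and L1: "L1 \<in> carrier_mat N N" and L2: "L2 \<in> carrier_mat N N"
    and s1: "L1\<^sup>T = L1" and s2: "L2\<^sup>T = L2"
    and o1: "L1 *\<^sub>v vec N (\<lambda>_. 1) = 0\<^sub>v N" and o2: "L2 *\<^sub>v vec N (\<lambda>_. 1) = 0\<^sub>v N"
    and r1: "\<And>x. x \<in> carrier_vec N \<Longrightarrow> quad L1 x \<le> l1 * (x \<bullet> x)"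
    and r2: "\<And>x. x \<in> carrier_vec N \<Longrightarrow> quad L2 x \<le> l2 * (x \<bullet> x)"
    and t1: "v1 \<in> carrier_vec N" "v1 \<bullet> v1 = 1" "quad L1 v1 = l1"
    and t2: "v2 \<in> carrier_vec N" "v2 \<bullet> v2 = 1" "quad L2 v2 = l2"
    and w0: "\<And>i. i < N \<Longrightarrow> w i \<ge> 0" and ws: "(\<Sum>i<N. w i) = c"
    and d: "sdec (multiplex_laplacian N L1 L2 w) U ds (2*N)"
  shows "max l1 l2 - 2*c/N \<le> ds!(2*N-1) - ds!1"
    and "c > 0 \<Longrightarrow> max l1 l2 - 2*c/N + min (c/N/2) ((c/N)^2/(8*N*(\<bar>l1\<bar>+\<bar>l2\<bar>+4*c+1))) \<le> ds!(2*N-1) - ds!1"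
proof -
  have Np: "real N \<ge> 1" using N by simp
  have c0: "c \<ge> 0" using ws w0 by (metis lessThan_iff sum_nonneg)
  have z: "0\<^sub>v N \<in> carrier_vec (N::nat)" by simp
  have top1: "l1 + (\<Sum>i<N. w i * (v1$i)^2) \<le> ds!(2*N-1)"
    using top_bound[OF L1 L2 N d t1(1) z] t1 L2 by simp
  have top2: "l2 + (\<Sum>i<N. w i * (v2$i)^2) \<le> ds!(2*N-1)"
    using top_bound[OF L1 L2 N d z t2(1)] t2 L1 by simp
  have nn: "(\<Sum>i<N. w i * (v$i)^2) \<ge> 0" for v :: "real vec" using w0 by (intro sum_nonneg) auto
  have top: "max l1 l2 \<le> ds!(2*N-1)" using top1 top2 nn[of v1] nn[of v2] by linarith
  have sec: "ds!1 \<le> 2*c/N"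
  proof -
    have h: "ds!1 \<le> 0 \<or> ds!1 * (vec N (\<lambda>_. 1) \<bullet> vec N (\<lambda>_. 1) + vec N (\<lambda>_. -1) \<bullet> vec N (\<lambda>_. -1))
       \<le> quad L1 (vec N (\<lambda>_. 1)) + quad L2 (vec N (\<lambda>_. -1)) + (\<Sum>i<N. w i * ((vec N (\<lambda>_. 1::real))$i - (vec N (\<lambda>_. -1))$i)^2)"
      by (rule second_bound[OF L1 L2 N s1 s2 o1 o2 d vec_carrier vec_carrier]) simp
    have e1: "vec N (\<lambda>_. 1) \<bullet> vec N (\<lambda>_. 1) + vec N (\<lambda>_. -1) \<bullet> vec N (\<lambda>_. -1) = (2*N::real)"
      by (simp add: scalar_prod_def)
    have e2: "(\<Sum>i<N. w i * ((vec N (\<lambda>_. 1::real))$i - (vec N (\<lambda>_. -1))$i)^2) = 4*c"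
    proof -
      have "(\<Sum>i<N. w i * ((vec N (\<lambda>_. 1::real))$i - (vec N (\<lambda>_. -1))$i)^2) = (\<Sum>i<N. 4 * w i)"
        by (rule sum.cong) auto
      thus ?thesis using ws by (simp add: sum_distrib_left[symmetric])
    qed
    have "ds!1 \<le> 0 \<or> ds!1 * (2*N) \<le> 4*c"
      using h unfolding e1 e2 quad_const[OF L1 s1 o1] quad_const[OF L2 s2 o2] by simp
    moreover have "0 \<le> 2*c/N" using c0 Np by simp
    moreover have "ds!1 * (2*N) \<le> 4*c \<Longrightarrow> ds!1 \<le> 2*c/N" using Np by (simp add: field_simps)
    ultimately show ?thesis by linarith
  qed
  show "max l1 l2 - 2*c/N \<le> ds!(2*N-1) - ds!1" using top sec by linarith
  assume cp: "c > 0"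
  define a where "a = c/N"
  define B where "B = \<bar>l1\<bar>+\<bar>l2\<bar>+4*c+1"
  have ap: "a > 0" unfolding a_def using cp Np by simp
  have aN: "a * N = c" unfolding a_def using Np by simp
  have Bp: "B > 0" "B \<ge> 4*c+1" unfolding B_def using cp by auto
  define D where "D = (\<Sum>i<N. (w i - a)^2)"
  have sd: "(\<Sum>i<N. (w i - a)) = 0" using ws aN by (simp add: sum_subtractf mult.commute)
  have wc: "w i \<le> c" if "i < N" for i
  proof -
    have "w i \<le> (\<Sum>i<N. w i)" by (rule member_le_sum) (use that w0 in auto)
    thus ?thesis using ws by simp
  qed
  have swd: "(\<Sum>i<N. w i * (w i - a)) = D"
  proof -
    have "(\<Sum>i<N. w i * (w i - a)) = (\<Sum>i<N. (w i - a)^2 + a * (w i - a))"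
      by (rule sum.cong) (auto simp: power2_eq_square algebra_simps)
    also have "\<dots> = D + a * (\<Sum>i<N. (w i - a))" unfolding D_def by (simp add: sum.distrib sum_distrib_left)
    finally show ?thesis using sd by simp
  qed
  have swd2: "(\<Sum>i<N. w i * (w i - a)^2) \<le> c * D"
    unfolding D_def sum_distrib_left
    by (rule sum_mono) (use wc in \<open>auto intro: mult_right_mono\<close>)
  have di: "(w i - a)^2 \<le> D" if "i < N" for i
    unfolding D_def by (rule member_le_sum) (use that in auto)
  have Dp: "D \<ge> 0" unfolding D_def by (simp add: sum_nonneg)
  have goal2: "max l1 l2 - 2*a + min (a/2) (a^2/(8*real N*B)) \<le> ds!(2*N-1) - ds!1"
  proof (cases "D \<le> a^2/4")
    case True
    have wa: "w i \<ge> a/2" if "i < N" for i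
    proof -
      have "(w i - a)^2 \<le> (a/2)^2" using di[OF that] True by (simp add: power_divide)
      hence "\<bar>w i - a\<bar>^2 \<le> (a/2)^2" by simp
      hence "\<bar>w i - a\<bar> \<le> a/2" by (rule power2_le_imp_le) (use ap in simp)
      thus ?thesis by linarith
    qed
    have lw: "a/2 \<le> (\<Sum>i<N. w i * (v$i)^2)" if v: "v \<in> carrier_vec N" "v \<bullet> v = 1" for v
    proof -
      have "(\<Sum>i<N. a/2 * (v$i)^2) = a/2 * (\<Sum>i<N. (v$i)^2)" by (rule sum_distrib_left[symmetric])
      hence "a/2 = (\<Sum>i<N. a/2 * (v$i)^2)" using v sum_sq[OF v(1)] by simp
      also have "\<dots> \<le> (\<Sum>i<N. w i * (v$i)^2)"
        by (rule sum_mono, rule mult_right_mono) (use wa in auto)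
      finally show ?thesis .
    qed
    have "max l1 l2 + a/2 \<le> ds!(2*N-1)" using top1 top2 lw[OF t1(1,2)] lw[OF t2(1,2)] by linarith
    moreover have "ds!1 \<le> 2*a" using sec unfolding a_def by simp
    ultimately show ?thesis by linarith
  next
    case False
    define eta where "eta = 1/B"
    define dv where "dv = vec N (\<lambda>i. w i - a)"
    define p where "p = vec N (\<lambda>i. 1 - eta * (w i - a))"
    define q where "q = vec N (\<lambda>i. -1 + eta * (w i - a))"
    have dvc: "dv \<in> carrier_vec N" unfolding dv_def by simp
    have pc: "p \<in> carrier_vec N" and qc: "q \<in> carrier_vec N" unfolding p_def q_def by auto
    have pe: "p = 1 \<cdot>\<^sub>v vec N (\<lambda>_. 1) + (-eta) \<cdot>\<^sub>v dv" unfolding p_def dv_def by (rule eq_vecI) auto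
    have qe: "q = (-1) \<cdot>\<^sub>v vec N (\<lambda>_. 1) + eta \<cdot>\<^sub>v dv" unfolding q_def dv_def by (rule eq_vecI) auto
    have dd: "dv \<bullet> dv = D" unfolding D_def using sum_sq[OF dvc] by (simp add: dv_def)
    have qp1: "quad L1 p \<le> eta^2 * (\<bar>l1\<bar> * D)"
    proof -
      have "quad L1 p = eta^2 * quad L1 dv" unfolding pe using quad_comb[OF L1 s1 vec_carrier o1 dvc, of 1 "-eta"] by simp
      also have "quad L1 dv \<le> \<bar>l1\<bar> * D"
        using r1[OF dvc] mult_right_mono[OF abs_ge_self Dp, of l1] unfolding dd by linarith
      hence "eta^2 * quad L1 dv \<le> eta^2 * (\<bar>l1\<bar> * D)" by (simp add: mult_left_mono)
      finally show ?thesis .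
    qed
    have qp2: "quad L2 q \<le> eta^2 * (\<bar>l2\<bar> * D)"
    proof -
      have "quad L2 q = eta^2 * quad L2 dv" unfolding qe using quad_comb[OF L2 s2 vec_carrier o2 dvc, of "-1" eta] by simp
      also have "quad L2 dv \<le> \<bar>l2\<bar> * D"
        using r2[OF dvc] mult_right_mono[OF abs_ge_self Dp, of l2] unfolding dd by linarith
      hence "eta^2 * quad L2 dv \<le> eta^2 * (\<bar>l2\<bar> * D)" by (simp add: mult_left_mono)
      finally show ?thesis .
    qed
    have coup: "(\<Sum>i<N. w i * (p$i - q$i)^2) = 4*c - 8*eta*D + 4*eta^2 * (\<Sum>i<N. w i * (w i - a)^2)"
    proof -
      have "(\<Sum>i<N. w i * (p$i - q$i)^2) = (\<Sum>i<N. 4 * w i - 8*eta * (w i * (w i - a)) + 4*eta^2 * (w i * (w i - a)^2))"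
        by (rule sum.cong) (auto simp: p_def q_def power2_eq_square algebra_simps)
      also have "\<dots> = 4 * (\<Sum>i<N. w i) - 8*eta * (\<Sum>i<N. w i * (w i - a)) + 4*eta^2 * (\<Sum>i<N. w i * (w i - a)^2)"
        by (simp add: sum.distrib sum_subtractf sum_distrib_left)
      finally show ?thesis using ws swd by simp
    qed
    have pp: "p \<bullet> p + q \<bullet> q = 2*real N + 2*eta^2*D"
    proof -
      have "p \<bullet> p + q \<bullet> q = (\<Sum>i<N. 2 - 4*eta*(w i - a) + 2*eta^2*(w i - a)^2)"
        unfolding sum_sq[OF pc] sum_sq[OF qc] sum.distrib[symmetric]
        by (rule sum.cong) (auto simp: p_def q_def power2_eq_square algebra_simps)
      also have "\<dots> = 2*real N + 2*eta^2*D"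
      proof -
        have s1: "(\<Sum>i<N. 4*eta*(w i - a)) = 0" unfolding sum_distrib_left[symmetric] sd by simp
        have s2: "(\<Sum>i<N. 2*eta^2*(w i - a)^2) = 2*eta^2*D" unfolding D_def by (simp add: sum_distrib_left)
        show ?thesis unfolding sum.distrib sum_subtractf s1 s2 by simp
      qed
      finally show ?thesis .
    qed
    have spq: "(\<Sum>i<N. p$i) + (\<Sum>i<N. q$i) = 0"
      unfolding sum.distrib[symmetric] by (rule sum.neutral) (auto simp: p_def q_def)
    have h: "ds!1 \<le> 0 \<or> ds!1 * (p \<bullet> p + q \<bullet> q) \<le> quad L1 p + quad L2 q + (\<Sum>i<N. w i * (p$i - q$i)^2)"
      by (rule second_bound[OF L1 L2 N s1 s2 o1 o2 d pc qc spq])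
    have tot: "quad L1 p + quad L2 q + (\<Sum>i<N. w i * (p$i - q$i)^2) \<le> 4*c - 7*D/B"
    proof -
      have "quad L1 p + quad L2 q + (\<Sum>i<N. w i * (p$i - q$i)^2)
          \<le> eta^2 * (\<bar>l1\<bar> * D) + eta^2 * (\<bar>l2\<bar> * D) + (4*c - 8*eta*D + 4*eta^2 * (c * D))"
        using qp1 qp2 coup mult_left_mono[OF swd2, of "4*eta^2"] by simp
      also have "\<dots> = 4*c - 8*eta*D + eta^2 * ((\<bar>l1\<bar>+\<bar>l2\<bar>+4*c) * D)" by (simp add: algebra_simps)
      also have "\<dots> \<le> 4*c - 8*eta*D + eta^2 * (B * D)"
      proof -
        have "(\<bar>l1\<bar>+\<bar>l2\<bar>+4*c) * D \<le> B * D" using Dp unfolding B_def by (intro mult_right_mono) auto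
        hence "eta^2 * ((\<bar>l1\<bar>+\<bar>l2\<bar>+4*c) * D) \<le> eta^2 * (B * D)" by (intro mult_left_mono) auto
        thus ?thesis by linarith
      qed
      also have "\<dots> = 4*c - 7*D/B" unfolding eta_def using Bp by (simp add: field_simps power2_eq_square)
      finally show ?thesis .
    qed
    have pp2: "p \<bullet> p + q \<bullet> q = 2*real N + 2*D/B^2" unfolding pp eta_def by (simp add: power_divide)
    have "ds!1 \<le> 0 \<or> ds!1 * (2*real N + 2*D/B^2) \<le> 4*c - 7*D/B" using h tot unfolding pp2 by linarith
    hence "ds!1 \<le> 2*(c/N) - (c/N)^2/(8*real N*B)"
      by (intro arith2[OF Np cp Bp(2)]) (use False in \<open>auto simp: a_def\<close>)
    hence "ds!1 \<le> 2*a - a^2/(8*real N*B)" unfolding a_def .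
    moreover have "min (a/2) (a^2/(8*real N*B)) \<le> a^2/(8*real N*B)" by simp
    ultimately show ?thesis using top by linarith
  qed
  thus "max l1 l2 - 2*c/N + min (c/N/2) ((c/N)^2/(8*N*(\<bar>l1\<bar>+\<bar>l2\<bar>+4*c+1))) \<le> ds!(2*N-1) - ds!1"
    unfolding a_def B_def by simp
qed

theorem lemma1:
  fixes N :: nat and E1 E2 :: "nat \<Rightarrow> nat \<Rightarrow> bool" and c :: real
  assumes "N \<ge> 1"
    and "simple_graph N E1" and "simple_graph N E2"
    and "c \<ge> 0"
  shows "H N (laplacian N E1) (laplacian N E2) c
           \<ge> max (lambda_max (laplacian N E1)) (lambda_max (laplacian N E2)) - 2 * c / real N
         \<and> (c \<noteq> 0 \<longrightarrow> H N (laplacian N E1) (laplacian N E2) c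
           > max (lambda_max (laplacian N E1)) (lambda_max (laplacian N E2)) - 2 * c / real N)"
proof -
  note N = assms(1) and g1 = assms(2) and g2 = assms(3) and c0 = assms(4)
  define L1 where "L1 = laplacian N E1"
  define L2 where "L2 = laplacian N E2"
  have L1: "L1 \<in> carrier_mat N N" and L2: "L2 \<in> carrier_mat N N" unfolding L1_def L2_def by auto
  have s1: "L1\<^sup>T = L1" and s2: "L2\<^sup>T = L2" unfolding L1_def L2_def using lap_sym g1 g2 by auto
  have o1: "L1 *\<^sub>v vec N (\<lambda>_. 1) = 0\<^sub>v N" and o2: "L2 *\<^sub>v vec N (\<lambda>_. 1) = 0\<^sub>v N"
    unfolding L1_def L2_def using lap_one g1 g2 by auto
  obtain U1 ds1 where d1: "sdec L1 U1 ds1 N" using sdec_exists[OF L1 s1] by blast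
  obtain U2 ds2 where d2: "sdec L2 U2 ds2 N" using sdec_exists[OF L2 s2] by blast
  have Np: "N > 0" using N by simp
  define l1 where "l1 = ds1!(N-1)"
  define l2 where "l2 = ds2!(N-1)"
  have lm1: "lambda_max L1 = l1" unfolding lambda_max_def l1_def using sdec_eig[OF d1, of N] N L1 by simp
  have lm2: "lambda_max L2 = l2" unfolding lambda_max_def l2_def using sdec_eig[OF d2, of N] N L2 by simp
  have r1: "\<And>x. x \<in> carrier_vec N \<Longrightarrow> quad L1 x \<le> l1 * (x \<bullet> x)" unfolding l1_def using ray_max[OF d1 Np] .
  have r2: "\<And>x. x \<in> carrier_vec N \<Longrightarrow> quad L2 x \<le> l2 * (x \<bullet> x)" unfolding l2_def using ray_max[OF d2 Np] .
  obtain v1 where t1: "v1 \<in> carrier_vec N" "v1 \<bullet> v1 = 1" "quad L1 v1 = l1" using ray_top[OF d1 Np] unfolding l1_def by blast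
  obtain v2 where t2: "v2 \<in> carrier_vec N" "v2 \<bullet> v2 = 1" "quad L2 v2 = l2" using ray_top[OF d2 Np] unfolding l2_def by blast
  define S where "S = {w. (\<forall>i<N. w i \<ge> 0) \<and> (\<Sum>i<N. w i) = c}"
  define f where "f = (\<lambda>w. eig (multiplex_laplacian N L1 L2 w) (2*N) - eig (multiplex_laplacian N L1 L2 w) 2)"
  have Hd: "H N L1 L2 c = (INF w \<in> S. f w)" unfolding H_def S_def f_def by simp
  define gap where "gap = min (c/N/2) ((c/N)^2/(8*N*(\<bar>l1\<bar>+\<bar>l2\<bar>+4*c+1)))"
  have bnd: "max l1 l2 - 2*c/N \<le> f w \<and> (c > 0 \<longrightarrow> max l1 l2 - 2*c/N + gap \<le> f w)" if w: "w \<in> S" for w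
  proof -
    let ?M = "multiplex_laplacian N L1 L2 w"
    have Mc: "?M \<in> carrier_mat (2*N) (2*N)" by (rule mpx_carrier[OF L1 L2])
    have Ms: "?M\<^sup>T = ?M" by (rule mpx_sym[OF L1 L2 s1 s2])
    obtain U ds where d: "sdec ?M U ds (2*N)" using sdec_exists[OF Mc Ms] by blast
    have fw: "f w = ds!(2*N-1) - ds!1" unfolding f_def using sdec_eig[OF d, of "2*N"] sdec_eig[OF d, of 2] N by simp
    have w0: "\<And>i. i < N \<Longrightarrow> w i \<ge> 0" and ws: "(\<Sum>i<N. w i) = c" using w unfolding S_def by auto
    note P = per_w[OF N L1 L2 s1 s2 o1 o2 r1 r2 t1 t2 w0 ws d]
    show ?thesis unfolding fw gap_def using P by auto
  qed
  have Sne: "S \<noteq> {}"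
  proof -
    have "(\<lambda>_. c/N) \<in> S" unfolding S_def using c0 Np by auto
    thus ?thesis by blast
  qed
  have part1: "max l1 l2 - 2*c/N \<le> H N L1 L2 c" unfolding Hd
    by (rule cINF_greatest[OF Sne]) (use bnd in blast)
  have part2: "max l1 l2 - 2*c/N < H N L1 L2 c" if cn: "c \<noteq> 0"
  proof -
    have cp: "c > 0" using cn c0 by simp
    have "gap > 0" unfolding gap_def using cp Np by (simp add: abs_ge_zero add_pos_nonneg add_nonneg_pos)
    moreover have "max l1 l2 - 2*c/N + gap \<le> H N L1 L2 c" unfolding Hd
      by (rule cINF_greatest[OF Sne]) (use bnd cp in blast)
    ultimately show ?thesis by linarith
  qed
  show ?thesis using part1 part2 unfolding L1_def[symmetric] L2_def[symmetric] lm1 lm2 by simp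
qed

end
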